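(* Let $n\ge 2$ and consider Tower of Hanoi on three pegs with $n$ disks, starting from the initial position (all $n$ disks on Peg 1). For every intermediate position $P$ (i.e. a position in which the disks are not all on a single peg), there is a finite sequence of legal moves of even length, in which no two consecutive moves move the same disk, that transforms the initial position into $P$.
   Context: Tower of Hanoi on three pegs (labeled 1, 2, 3) with $n$ disks of pairwise distinct sizes: a position is an assignment of each disk to a peg, the disks on each peg being stacked with sizes decreasing from bottom to top. A legal move transfers the top disk of one peg to a different peg that is empty or whose top disk is larger. Here, sequences of legal moves are considered without any restriction on intermediate positions (in particular, intermediate positions may have all disks on one peg), except that no disk may be moved in two consecutive moves. *)

theory Defs
  imports Main
begin

(* Disks are 0..<n; disk i has size i (so disk 0 is the smallest).
   A position is a list p of length n with p ! i in {1,2,3} the peg of disk i.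
   The stacking order on each peg is forced by the sizes, so this encodes a position. *)

definition valid_pos :: "nat \<Rightarrow> nat list \<Rightarrow> bool" where
  "valid_pos n p \<longleftrightarrow> length p = n \<and> set p \<subseteq> {1,2,3}"

definition legal_move :: "nat \<Rightarrow> nat list \<Rightarrow> nat \<Rightarrow> nat list \<Rightarrow> bool" where
  "legal_move n p d q \<longleftrightarrow> valid_pos n p \<and> d < n \<and>
     (\<exists>b\<in>{1,2,3}. b \<noteq> p ! d \<and> q = p[d := b] \<and>
        (\<forall>j<d. p ! j \<noteq> p ! d \<and> p ! j \<noteq> b))"

definition move_seq :: "nat \<Rightarrow> nat list list \<Rightarrow> nat list \<Rightarrow> bool" where
  "move_seq n ps ds \<longleftrightarrow> length ps = length ds + 1 \<and>
     (\<forall>i<length ds. legal_move n (ps ! i) (ds ! i) (ps ! Suc i)) \<and>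
     (\<forall>i. Suc i < length ds \<longrightarrow> ds ! i \<noteq> ds ! Suc i)"

definition initial_pos :: "nat \<Rightarrow> nat list" where
  "initial_pos n = replicate n 1"

definition intermediate :: "nat \<Rightarrow> nat list \<Rightarrow> bool" where
  "intermediate n p \<longleftrightarrow> valid_pos n p \<and> \<not> (\<exists>a. \<forall>i<n. p ! i = a)"

end

theory Submission
  imports Defs
begin

inductive rw :: "nat \<Rightarrow> nat list \<Rightarrow> nat list \<Rightarrow> nat list \<Rightarrow> bool" where
  nil: "valid_pos n p \<Longrightarrow> rw n p [] p"
| cons: "legal_move n p d p' \<Longrightarrow> rw n p' ds q \<Longrightarrow> (ds = [] \<or> hd ds \<noteq> d) \<Longrightarrow> rw n p (d # ds) q"

lemma legal_valid: "legal_move n p d q \<Longrightarrow> valid_pos n q"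
  unfolding legal_move_def valid_pos_def
  by (auto dest: set_update_subset_insert[THEN subsetD])

lemma rw_valid: "rw n p ds q \<Longrightarrow> valid_pos n p \<and> valid_pos n q"
  by (induction rule: rw.induct) (auto simp: legal_move_def)

lemma rw_set: "rw n p ds q \<Longrightarrow> set ds \<subseteq> {..<n}"
  by (induction rule: rw.induct) (auto simp: legal_move_def)

lemma rw_single: "legal_move n p d q \<Longrightarrow> rw n p [d] q"
  by (rule rw.cons[OF _ rw.nil]) (auto intro: legal_valid)

lemma rw_comp: "rw n p ds q \<Longrightarrow> rw n q es r \<Longrightarrow> (ds = [] \<or> es = [] \<or> last ds \<noteq> hd es)
   \<Longrightarrow> rw n p (ds @ es) r"
proof (induction rule: rw.induct)
  case (nil n p) then show ?case by simp
next
  case (cons n p d p' ds q)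
  have "rw n p' (ds @ es) r"
    using cons by (cases "ds = []") auto
  moreover have "ds @ es = [] \<or> hd (ds @ es) \<noteq> d"
    using cons.hyps(3) cons.prems(2) by (cases ds) auto
  ultimately show ?case using cons.hyps(1) by (auto intro: rw.cons)
qed

lemma rw_lift: "rw m p ds q \<Longrightarrow> x \<in> {1,2,3} \<Longrightarrow> rw (Suc m) (p @ [x]) ds (q @ [x])"
proof (induction rule: rw.induct)
  case (nil n p) then show ?case by (auto intro!: rw.nil simp: valid_pos_def)
next
  case (cons n p d p' ds q)
  have "legal_move (Suc n) (p @ [x]) d (p' @ [x])"
    using cons.hyps(1) cons.prems unfolding legal_move_def valid_pos_def
    by (auto simp: nth_append list_update_append1)
  then show ?case using cons by (auto intro: rw.cons)
qed

lemma rw_to_seq: "rw n p ds q \<Longrightarrow> \<exists>ps. move_seq n ps ds \<and> hd ps = p \<and> last ps = q"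
proof (induction rule: rw.induct)
  case (nil n p) then show ?case by (auto intro!: exI[of _ "[p]"] simp: move_seq_def)
next
  case (cons n p d p' ds q)
  then obtain ps where ps: "move_seq n ps ds" "hd ps = p'" "last ps = q" by blast
  have ne: "ps \<noteq> []" using ps(1) by (auto simp: move_seq_def)
  have h0: "ps ! 0 = p'" using ps(2) ne by (simp add: hd_conv_nth)
  have m: "length ps = length ds + 1"
    "\<forall>i<length ds. legal_move n (ps ! i) (ds ! i) (ps ! Suc i)"
    "\<forall>i. Suc i < length ds \<longrightarrow> ds ! i \<noteq> ds ! Suc i" using ps(1) unfolding move_seq_def by auto
  have A: "\<forall>i<length (d # ds). legal_move n ((p # ps) ! i) ((d # ds) ! i) ((p # ps) ! Suc i)"
  proof (intro allI impI)
    fix i assume "i < length (d # ds)"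
    then show "legal_move n ((p # ps) ! i) ((d # ds) ! i) ((p # ps) ! Suc i)"
      using m(2) h0 cons.hyps(1) by (cases i) auto
  qed
  have B: "\<forall>i. Suc i < length (d # ds) \<longrightarrow> (d # ds) ! i \<noteq> (d # ds) ! Suc i"
  proof (intro allI impI)
    fix i assume i: "Suc i < length (d # ds)"
    show "(d # ds) ! i \<noteq> (d # ds) ! Suc i"
    proof (cases i)
      case 0
      then have "ds \<noteq> []" using i by auto
      then show ?thesis using cons.hyps(3) 0 by (simp add: hd_conv_nth)
    next
      case (Suc j) then show ?thesis using m(3) i by auto
    qed
  qed
  have "move_seq n (p # ps) (d # ds)"
    unfolding move_seq_def using A B m(1) by simp
  then show ?case using ps ne by (auto intro!: exI[of _ "p # ps"])
qed

lemma big: assumes as: "a \<in> {1,2,3}" "b \<in> {1,2,3}" "c \<in> {1,2,3}" "a \<noteq> b" "c \<noteq> a" "c \<noteq> b"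
  shows "rw (Suc m) (replicate m c @ [a]) [m] (replicate m c @ [b])"
proof (rule rw_single)
  have u: "(replicate m c @ [a])[m := b] = replicate m c @ [b]"
    using list_update_length[of "replicate m c" a "[]" b] by simp
  have v: "valid_pos (Suc m) (replicate m c @ [a])" using as by (auto simp: valid_pos_def)
  have w: "\<forall>j<m. (replicate m c @ [a]) ! j \<noteq> (replicate m c @ [a]) ! m \<and> (replicate m c @ [a]) ! j \<noteq> b"
    using as by (auto simp: nth_append)
  have x: "(replicate m c @ [a]) ! m = a" by (simp add: nth_append)
  show "legal_move (Suc m) (replicate m c @ [a]) m (replicate m c @ [b])"
    unfolding legal_move_def using v w u x as by auto
qed

lemma third: "a \<in> {1,2,3::nat} \<Longrightarrow> b \<in> {1,2,3} \<Longrightarrow> \<exists>c\<in>{1,2,3}. c \<noteq> a \<and> c \<noteq> b"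
proof (cases "a \<noteq> 1 \<and> b \<noteq> 1")
  case True then show ?thesis by (intro bexI[of _ 1]) auto
next
  case F1: False
  show ?thesis
  proof (cases "a \<noteq> 2 \<and> b \<noteq> 2")
    case True then show ?thesis by (intro bexI[of _ 2]) auto
  next
    case False
    then have "a \<noteq> 3 \<and> b \<noteq> 3" using F1 by auto
    then show ?thesis by (intro bexI[of _ 3]) auto
  qed
qed

lemma rep_snoc: "replicate (Suc m) a = replicate m a @ [a]"
  by (simp add: replicate_append_same)

lemma H: "n \<ge> 1 \<Longrightarrow> a \<in> {1,2,3} \<Longrightarrow> b \<in> {1,2,3} \<Longrightarrow> a \<noteq> b \<Longrightarrow>
  \<exists>ds. rw n (replicate n a) ds (replicate n b) \<and> odd (length ds)"
proof (induction n arbitrary: a b)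
  case 0 then show ?case by simp
next
  case (Suc m)
  show ?case
  proof (cases m)
    case 0
    have "rw 1 [a] [0] [b]"
      using Suc.prems by (intro rw_single) (auto simp: legal_move_def valid_pos_def)
    then show ?thesis using 0 by (auto intro!: exI[of _ "[0]"])
  next
    case (Suc m')
    obtain c where c: "c \<in> {1,2,3}" "c \<noteq> a" "c \<noteq> b" using third Suc.prems by blast
    obtain d1 where d1: "rw m (replicate m a) d1 (replicate m c)" "odd (length d1)"
      using Suc.IH[of a c] Suc c Suc.prems by auto
    obtain d2 where d2: "rw m (replicate m c) d2 (replicate m b)" "odd (length d2)"
      using Suc.IH[of c b] Suc c Suc.prems by auto
    have l1: "rw (Suc m) (replicate m a @ [a]) d1 (replicate m c @ [a])" using rw_lift d1 Suc.prems by auto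
    have l2: "rw (Suc m) (replicate m c @ [b]) d2 (replicate m b @ [b])" using rw_lift d2 Suc.prems by auto
    have bg: "rw (Suc m) (replicate m c @ [a]) [m] (replicate m c @ [b])" using big c Suc.prems by auto
    have s1: "set d1 \<subseteq> {..<m}" "set d2 \<subseteq> {..<m}" using rw_set d1 d2 by auto
    have ne: "d1 \<noteq> []" "d2 \<noteq> []" using d1 d2 by auto
    have "rw (Suc m) (replicate m a @ [a]) (d1 @ [m] @ d2) (replicate m b @ [b])"
      apply (rule rw_comp[OF l1 rw_comp[OF bg l2]])
    proof -
      have "last d1 < m" "hd d2 < m" using s1 ne last_in_set hd_in_set by blast+
      then show "d1 = [] \<or> [m] @ d2 = [] \<or> last d1 \<noteq> hd ([m] @ d2)" by simp
    qed (use ne s1 in \<open>auto dest: hd_in_set\<close>)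
    then have "rw (Suc m) (replicate (Suc m) a) (d1 @ [m] @ d2) (replicate (Suc m) b)"
      by (simp only: rep_snoc)
    then show ?thesis using d1 d2 by (intro exI[of _ "d1 @ [m] @ d2"]) auto
  qed
qed

lemma Hl: assumes "m \<ge> 1" "a \<in> {1,2,3}" "c \<in> {1,2,3}" "a \<noteq> c" "x \<in> {1,2,3}"
  shows "\<exists>d. rw (Suc m) (replicate m a @ [x]) d (replicate m c @ [x]) \<and> odd (length d) \<and> d \<noteq> [] \<and> last d < m"
proof -
  obtain d where d: "rw m (replicate m a) d (replicate m c)" "odd (length d)" using H assms by blast
  have ne: "d \<noteq> []" using d by auto
  have "last d < m" using rw_set[OF d(1)] last_in_set[OF ne] by auto
  then show ?thesis using d ne rw_lift[OF d(1) assms(5)] by blast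
qed

lemma glue0: assumes "rw (Suc m) p ds (replicate m c @ [u])" "ds \<noteq> []" "last ds < m"
  "u \<in> {1,2,3}" "v \<in> {1,2,3}" "c \<in> {1,2,3}" "u \<noteq> v" "c \<noteq> u" "c \<noteq> v"
  "rw m (replicate m c) es q"
  shows "rw (Suc m) p (ds @ [m] @ es) (q @ [v])"
proof -
  have b: "rw (Suc m) (replicate m c @ [u]) [m] (replicate m c @ [v])" using big assms by auto
  have l: "rw (Suc m) (replicate m c @ [v]) es (q @ [v])" using rw_lift assms by auto
  have h: "es = [] \<or> hd es < m" using rw_set[OF assms(10)] hd_in_set by auto
  have "rw (Suc m) (replicate m c @ [u]) ([m] @ es) (q @ [v])"
    by (rule rw_comp[OF b l]) (use h in auto)
  then show ?thesis by (rule rw_comp[OF assms(1)]) (use assms(3) in auto)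
qed

lemma glueH: assumes "rw (Suc m) p ds (replicate m c @ [u])" "ds \<noteq> []" "last ds < m"
  "u \<in> {1,2,3}" "v \<in> {1,2,3}" "c \<in> {1,2,3}" "u \<noteq> v" "c \<noteq> u" "c \<noteq> v"
  "b \<in> {1,2,3}" "b \<noteq> c" "m \<ge> 1"
  shows "\<exists>ds'. rw (Suc m) p ds' (replicate m b @ [v]) \<and> (even (length ds') \<longleftrightarrow> even (length ds))
     \<and> ds' \<noteq> [] \<and> last ds' < m"
proof -
  obtain es where es: "rw m (replicate m c) es (replicate m b)" "odd (length es)" using H assms by blast
  have ne: "es \<noteq> []" using es by auto
  have "last es < m" using rw_set[OF es(1)] last_in_set[OF ne] by auto
  then show ?thesis using glue0[OF assms(1-9) es(1)] es ne by (intro exI[of _ "ds @ [m] @ es"]) auto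
qed

lemma glueB: assumes "rw (Suc m) p ds (replicate m c @ [u])" "ds \<noteq> []" "last ds < m"
  "u \<in> {1,2,3}" "v \<in> {1,2,3}" "c \<in> {1,2,3}" "u \<noteq> v" "c \<noteq> u" "c \<noteq> v"
  shows "\<exists>ds'. rw (Suc m) p ds' (replicate m c @ [v]) \<and> (even (length ds') \<longleftrightarrow> odd (length ds))"
proof -
  have "rw m (replicate m c) [] (replicate m c)" using assms by (auto intro!: rw.nil simp: valid_pos_def)
  from glue0[OF assms this] show ?thesis by (intro exI[of _ "ds @ [m]"]) auto
qed

lemma not_inter: "valid_pos m P \<Longrightarrow> \<not> intermediate m P \<Longrightarrow> \<exists>d\<in>{1,2,3}. P = replicate m d"
proof -
  assume v: "valid_pos m P" and ni: "\<not> intermediate m P"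
  then obtain a where a: "\<forall>i<m. P ! i = a" by (auto simp: intermediate_def)
  have l: "length P = m" using v by (auto simp: valid_pos_def)
  show ?thesis
  proof (cases "m = 0")
    case True then show ?thesis using l by auto
  next
    case False
    have "P = replicate m a" using a l by (auto intro: nth_equalityI)
    moreover have "a \<in> {1,2,3}" using v False a l nth_mem[of 0 P] by (auto simp: valid_pos_def)
    ultimately show ?thesis by blast
  qed
qed

lemma T: "n \<ge> 2 \<Longrightarrow> a \<in> {1,2,3} \<Longrightarrow> intermediate n P \<Longrightarrow>
   \<exists>ds. rw n (replicate n a) ds P \<and> (even (length ds) \<longleftrightarrow> e)"
proof (induction n arbitrary: a P e)
  case 0 then show ?case by simp
next
  case (Suc m)
  have m1: "m \<ge> 1" using Suc.prems by auto
  have vP: "valid_pos (Suc m) P" using Suc.prems by (auto simp: intermediate_def)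
  then have lP: "length P = Suc m" by (simp add: valid_pos_def)
  define P' where "P' = butlast P"
  define x where "x = last P"
  have Pe: "P = P' @ [x]" using lP unfolding P'_def x_def
    by (metis append_butlast_last_id list.size(3) nat.distinct(1))
  have vP': "valid_pos m P'" and x3: "x \<in> {1,2,3}" using vP lP Pe by (auto simp: valid_pos_def)
  have a3: "a \<in> {1,2,3}" using Suc.prems by auto
  have rep: "replicate (Suc m) a = replicate m a @ [a]" by (rule rep_snoc)
  show ?case
  proof (cases "intermediate m P'")
    case True
    have m2: "m \<ge> 2"
    proof (rule ccontr)
      assume "\<not> m \<ge> 2" then have "m = 1" using m1 by auto
      then show False using True vP' by (auto simp: intermediate_def valid_pos_def)
    qed
    show ?thesis
    proof (cases "x = a")
      case True
      obtain ds where "rw m (replicate m a) ds P' \<and> (even (length ds) \<longleftrightarrow> e)"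
        using Suc.IH[OF m2 a3 \<open>intermediate m P'\<close>] by blast
      then show ?thesis using rw_lift[of m "replicate m a" ds P' a] a3 True Pe rep by auto
    next
      case False
      obtain c where c: "c \<in> {1,2,3}" "c \<noteq> a" "c \<noteq> x" using third a3 x3 by blast
      obtain d where d: "rw (Suc m) (replicate m a @ [a]) d (replicate m c @ [a])" "odd (length d)" "d \<noteq> []" "last d < m"
        using Hl[OF m1 a3 c(1) c(2)[symmetric] a3] by blast
      obtain es where es: "rw m (replicate m c) es P' \<and> (even (length es) \<longleftrightarrow> e)"
        using Suc.IH[OF m2 c(1) \<open>intermediate m P'\<close>] by blast
      have "rw (Suc m) (replicate m a @ [a]) (d @ [m] @ es) (P' @ [x])"
        using glue0[OF d(1,3,4) a3 x3 c(1) False[symmetric]] c es by auto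
      then show ?thesis using d es Pe rep by (intro exI[of _ "d @ [m] @ es"]) auto
    qed
  next
    case False
    then obtain d where d3: "d \<in> {1,2,3}" and P'd: "P' = replicate m d" using not_inter vP' by blast
    have dx: "d \<noteq> x"
    proof
      assume "d = x"
      then have "P = replicate (Suc m) x" using Pe P'd by (simp add: replicate_append_same)
      then have "\<forall>i<Suc m. P ! i = x" by (simp del: replicate_Suc)
      then show False using Suc.prems(3) unfolding intermediate_def by blast
    qed
    show ?thesis
    proof (cases "x = a")
      case True
      obtain c where c: "c \<in> {1,2,3}" "c \<noteq> a" "c \<noteq> d" using third a3 d3 by blast
      have da: "d \<noteq> a" using dx True by simp
      show ?thesis
      proof (cases e)
        case False
        obtain w where "rw (Suc m) (replicate m a @ [a]) w (replicate m d @ [a])" "odd (length w)"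
          using Hl[OF m1 a3 d3 da[symmetric] a3] by blast
        then show ?thesis using False Pe P'd True rep by (intro exI[of _ w]) auto
      next
        case et: True
        obtain w1 where w1: "rw (Suc m) (replicate m a @ [a]) w1 (replicate m c @ [a])" "odd (length w1)" "w1 \<noteq> []" "last w1 < m"
          using Hl[OF m1 a3 c(1) c(2)[symmetric] a3] by blast
        obtain w2 where w2: "rw (Suc m) (replicate m a @ [a]) w2 (replicate m a @ [d])" "even (length w2) = even (length w1)" "w2 \<noteq> []" "last w2 < m"
          using glueH[OF w1(1,3,4), where v=d and b=a] a3 d3 c da m1 by auto
        obtain w3 where w3: "rw (Suc m) (replicate m a @ [a]) w3 (replicate m d @ [c])" "even (length w3) = even (length w2)" "w3 \<noteq> []" "last w3 < m"
          using glueH[OF w2(1,3,4), where v=c and b=d] a3 d3 c da m1 by auto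
        obtain w4 where w4: "rw (Suc m) (replicate m a @ [a]) w4 (replicate m d @ [a])" "even (length w4) = odd (length w3)"
          using glueB[OF w3(1,3,4), where v=a] a3 d3 c da by auto
        show ?thesis using w1 w2 w3 w4 et Pe P'd True rep by (intro exI[of _ w4]) auto
      qed
    next
      case xa: False
      obtain c where c: "c \<in> {1,2,3}" "c \<noteq> a" "c \<noteq> x" using third a3 x3 by blast
      have dac: "d = a \<or> d = c" using d3 a3 x3 c dx xa by auto
      show ?thesis
      proof (cases "d = c")
        case dc: True
        show ?thesis
        proof (cases e)
          case True
          obtain w1 where w1: "rw (Suc m) (replicate m a @ [a]) w1 (replicate m c @ [a])" "odd (length w1)" "w1 \<noteq> []" "last w1 < m"
            using Hl[OF m1 a3 c(1) c(2)[symmetric] a3] by blast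
          obtain w2 where "rw (Suc m) (replicate m a @ [a]) w2 (replicate m c @ [x])" "even (length w2) = odd (length w1)"
            using glueB[OF w1(1,3,4), where v=x] a3 x3 c xa by auto
          then show ?thesis using w1 True Pe P'd dc rep by (intro exI[of _ w2]) auto
        next
          case False
          obtain w1 where w1: "rw (Suc m) (replicate m a @ [a]) w1 (replicate m x @ [a])" "odd (length w1)" "w1 \<noteq> []" "last w1 < m"
            using Hl[OF m1 a3 x3 xa[symmetric] a3] by blast
          obtain w2 where w2: "rw (Suc m) (replicate m a @ [a]) w2 (replicate m a @ [c])" "even (length w2) = even (length w1)" "w2 \<noteq> []" "last w2 < m"
            using glueH[OF w1(1,3,4), where v=c and b=a] a3 x3 c xa m1 by auto
          obtain w3 where w3: "rw (Suc m) (replicate m a @ [a]) w3 (replicate m c @ [x])" "even (length w3) = even (length w2)"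
            using glueH[OF w2(1,3,4), where v=x and b=c] a3 x3 c xa m1 by auto
          show ?thesis using w1 w2 w3 False Pe P'd dc rep by (intro exI[of _ w3]) auto
        qed
      next
        case dc: False
        then have da: "d = a" using dac by auto
        show ?thesis
        proof (cases e)
          case False
          obtain w1 where w1: "rw (Suc m) (replicate m a @ [a]) w1 (replicate m c @ [a])" "odd (length w1)" "w1 \<noteq> []" "last w1 < m"
            using Hl[OF m1 a3 c(1) c(2)[symmetric] a3] by blast
          obtain w2 where w2: "rw (Suc m) (replicate m a @ [a]) w2 (replicate m a @ [x])" "even (length w2) = even (length w1)"
            using glueH[OF w1(1,3,4), where v=x and b=a] a3 x3 c xa m1 by auto
          show ?thesis using w1 w2 False Pe P'd da rep by (intro exI[of _ w2]) auto
        next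
          case True
          obtain w1 where w1: "rw (Suc m) (replicate m a @ [a]) w1 (replicate m x @ [a])" "odd (length w1)" "w1 \<noteq> []" "last w1 < m"
            using Hl[OF m1 a3 x3 xa[symmetric] a3] by blast
          obtain w2 where w2: "rw (Suc m) (replicate m a @ [a]) w2 (replicate m a @ [c])" "even (length w2) = even (length w1)" "w2 \<noteq> []" "last w2 < m"
            using glueH[OF w1(1,3,4), where v=c and b=a] a3 x3 c xa m1 by auto
          obtain w3 where w3: "rw (Suc m) (replicate m a @ [a]) w3 (replicate m a @ [x])" "even (length w3) = odd (length w2)"
            using glueB[OF w2(1,3,4), where v=x] a3 x3 c xa by auto
          show ?thesis using w1 w2 w3 True Pe P'd da rep by (intro exI[of _ w3]) auto
        qed
      qed
    qed
  qed
qed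

theorem corollary1:
  fixes n :: nat and P :: "nat list"
  assumes "n \<ge> 2" and "intermediate n P"
  shows "\<exists>ps ds. move_seq n ps ds \<and> even (length ds) \<and>
           hd ps = initial_pos n \<and> last ps = P"
proof -
  obtain ds where "rw n (replicate n 1) ds P" "even (length ds)"
    using T[OF assms(1) _ assms(2), of 1 True] by auto
  then show ?thesis using rw_to_seq unfolding initial_pos_def by blast
qed

end
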